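(* Let $\gamma=\gamma_1\cup\gamma_2$ be a finite set of interactions with $\mathit{Act}(\gamma_1)\cap\mathit{Act}(\gamma_2)=\emptyset$. Then $\mathcal{E}(\gamma)\equiv\mathcal{E}(\gamma_1)\wedge\mathcal{E}(\gamma_2)$, i.e. the two formulas are satisfied by exactly the same assignments of real values to the history clocks $h_a$, $a\in\mathit{Act}(\gamma)$.
   Context: An interaction is a finite nonempty set of actions; for a set of interactions $\gamma$, $\mathit{Act}(\gamma)=\bigcup_{\alpha\in\gamma}\alpha$. Each action $a$ has an associated real variable (history clock) $h_a$. For a set of interactions $\gamma$ and a set of actions $\alpha$, $\gamma\ominus\alpha=\{\beta\setminus\alpha\mid\beta\in\gamma,\ \beta\not\subseteq\alpha\}$. Define recursively $\mathcal{E}(\emptyset)=\mathit{true}$ and, for $\gamma\neq\emptyset$, $\mathcal{E}(\gamma)=\bigvee_{\alpha\in\gamma}\Big(\bigwedge_{a_i,a_j\in\alpha}h_{a_i}=h_{a_j}\ \wedge\bigwedge_{a_i\in\alpha,\ a_k\in\mathit{Act}(\gamma\ominus\alpha)}h_{a_i}\le h_{a_k}\ \wedge\ \mathcal{E}(\gamma\ominus\alpha)\Big)$. *)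

theory Defs
  imports Complex_Main
begin

text \<open>A valuation of the history clocks
is a function h :: 'a => real (h a is the value of the clock h_a).\<close>

definition interaction :: "'a set \<Rightarrow> bool" where
  "interaction \<alpha> \<longleftrightarrow> finite \<alpha> \<and> \<alpha> \<noteq> {}"

definition Act :: "'a set set \<Rightarrow> 'a set" where
  "Act \<gamma> = \<Union>\<gamma>"

definition ominus :: "'a set set \<Rightarrow> 'a set \<Rightarrow> 'a set set" (infixl "\<ominus>" 65) where
  "\<gamma> \<ominus> \<alpha> = {\<beta> - \<alpha> | \<beta>. \<beta> \<in> \<gamma> \<and> \<not> \<beta> \<subseteq> \<alpha>}"

text \<open>The formula E(gamma), given as its satisfaction relation on clock valuations.
The recursion of the paper is well-founded on finite sets of (nonempty) interactions
(each step removes a nonempty interaction's actions), so it is rendered as the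
inductive predicate whose rules are exactly the recursive clauses:
E({}) = true, and E(gamma) for nonempty gamma is the disjunction over alpha in gamma.\<close>

inductive E :: "'a set set \<Rightarrow> ('a \<Rightarrow> real) \<Rightarrow> bool" where
  E_empty: "E {} h"
| E_step: "\<lbrakk> \<alpha> \<in> \<gamma>;
             \<forall>ai\<in>\<alpha>. \<forall>aj\<in>\<alpha>. h ai = h aj;
             \<forall>ai\<in>\<alpha>. \<forall>ak\<in>Act (\<gamma> \<ominus> \<alpha>). h ai \<le> h ak;
             E (\<gamma> \<ominus> \<alpha>) h \<rbrakk> \<Longrightarrow> E \<gamma> h"

end

theory Submission
  imports Defs
begin

lemma act_ominus: "Act (\<gamma> \<ominus> \<alpha>) = Act \<gamma> - \<alpha>"
  unfolding Act_def ominus_def by blast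

lemma ominus_union: "(A \<union> B) \<ominus> \<alpha> = (A \<ominus> \<alpha>) \<union> (B \<ominus> \<alpha>)"
  unfolding ominus_def by blast

lemma ominus_disj: "\<forall>\<beta>\<in>B. \<beta> \<noteq> {} \<Longrightarrow> Act B \<inter> \<alpha> = {} \<Longrightarrow> B \<ominus> \<alpha> = B"
proof -
  assume a: "\<forall>\<beta>\<in>B. \<beta> \<noteq> {}" "Act B \<inter> \<alpha> = {}"
  have h: "\<And>\<beta>. \<beta> \<in> B \<Longrightarrow> \<beta> - \<alpha> = \<beta> \<and> \<not> \<beta> \<subseteq> \<alpha>"
  proof -
    fix \<beta> assume b: "\<beta> \<in> B"
    have "\<beta> \<inter> \<alpha> = {}" using a(2) b unfolding Act_def by blast
    then show "\<beta> - \<alpha> = \<beta> \<and> \<not> \<beta> \<subseteq> \<alpha>" using a(1) b by blast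
  qed
  show ?thesis unfolding ominus_def
  proof (intro set_eqI iffI)
    fix x assume "x \<in> {\<beta> - \<alpha> |\<beta>. \<beta> \<in> B \<and> \<not> \<beta> \<subseteq> \<alpha>}"
    then obtain \<beta> where "x = \<beta> - \<alpha>" "\<beta> \<in> B" by blast
    then show "x \<in> B" using h by simp
  next
    fix x assume "x \<in> B"
    then have "x = x - \<alpha> \<and> x \<in> B \<and> \<not> x \<subseteq> \<alpha>" using h by simp
    then show "x \<in> {\<beta> - \<alpha> |\<beta>. \<beta> \<in> B \<and> \<not> \<beta> \<subseteq> \<alpha>}" by blast
  qed
qed

lemma ominus_ne: "\<forall>\<beta>\<in>\<gamma> \<ominus> \<alpha>. \<beta> \<noteq> {}"
  unfolding ominus_def by blast

lemma fwd: "E \<gamma> h \<Longrightarrow> \<gamma> = \<gamma>1 \<union> \<gamma>2 \<Longrightarrow> \<forall>\<beta>\<in>\<gamma>. \<beta> \<noteq> {} \<Longrightarrow> Act \<gamma>1 \<inter> Act \<gamma>2 = {}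
   \<Longrightarrow> E \<gamma>1 h \<and> E \<gamma>2 h"
proof (induction arbitrary: \<gamma>1 \<gamma>2 rule: E.induct)
  case (E_empty h)
  then show ?case by (auto intro: E.E_empty)
next
  case (E_step \<alpha> \<gamma> h)
  show ?case
  proof (cases "\<alpha> \<in> \<gamma>1")
    case True
    have d: "Act \<gamma>2 \<inter> \<alpha> = {}" using True E_step.prems(3) unfolding Act_def by blast
    have ne2: "\<forall>\<beta>\<in>\<gamma>2. \<beta> \<noteq> {}" using E_step.prems(1,2) by simp
    have eq: "\<gamma> \<ominus> \<alpha> = (\<gamma>1 \<ominus> \<alpha>) \<union> \<gamma>2"
      using E_step.prems(1) ominus_disj[OF ne2 d] by (simp only: ominus_union)
    have "E (\<gamma>1 \<ominus> \<alpha>) h \<and> E \<gamma>2 h"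
      apply (rule E_step.IH[OF eq ominus_ne])
      using E_step.prems(3) unfolding act_ominus by blast
    moreover have "E \<gamma>1 h"
      apply (rule E.E_step[OF True E_step.hyps(2)])
      using E_step.hyps(3) unfolding act_ominus E_step.prems(1) unfolding Act_def apply blast
      using \<open>E (\<gamma>1 \<ominus> \<alpha>) h \<and> E \<gamma>2 h\<close> by blast
    ultimately show ?thesis by blast
  next
    case False
    then have True: "\<alpha> \<in> \<gamma>2" using E_step.hyps(1) unfolding E_step.prems(1) by blast
    have d: "Act \<gamma>1 \<inter> \<alpha> = {}" using True E_step.prems(3) unfolding Act_def by blast
    have ne1: "\<forall>\<beta>\<in>\<gamma>1. \<beta> \<noteq> {}" using E_step.prems(1,2) by simp
    have eq: "\<gamma> \<ominus> \<alpha> = \<gamma>1 \<union> (\<gamma>2 \<ominus> \<alpha>)"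
      using E_step.prems(1) ominus_disj[OF ne1 d] by (simp only: ominus_union)
    have "E \<gamma>1 h \<and> E (\<gamma>2 \<ominus> \<alpha>) h"
      apply (rule E_step.IH[OF eq ominus_ne])
      using E_step.prems(3) unfolding act_ominus by blast
    moreover have "E \<gamma>2 h"
      apply (rule E.E_step[OF True E_step.hyps(2)])
      using E_step.hyps(3) unfolding act_ominus E_step.prems(1) unfolding Act_def apply blast
      using \<open>E \<gamma>1 h \<and> E (\<gamma>2 \<ominus> \<alpha>) h\<close> by blast
    ultimately show ?thesis by blast
  qed
qed

lemma bstep:
  assumes "\<alpha> \<in> \<gamma>1" "\<forall>ai\<in>\<alpha>. \<forall>aj\<in>\<alpha>. h ai = h aj"
    "\<forall>ai\<in>\<alpha>. \<forall>ak\<in>Act (\<gamma>1 \<ominus> \<alpha>). h ai \<le> h ak"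
    "\<forall>ai\<in>\<alpha>. \<forall>ak\<in>Act \<gamma>2. h ai \<le> h ak"
    "E ((\<gamma>1 \<ominus> \<alpha>) \<union> \<gamma>2) h"
    "\<forall>\<beta>\<in>\<gamma>2. \<beta> \<noteq> {}" "Act \<gamma>1 \<inter> Act \<gamma>2 = {}"
  shows "E (\<gamma>1 \<union> \<gamma>2) h"
proof -
  have d: "Act \<gamma>2 \<inter> \<alpha> = {}" using assms(1,7) unfolding Act_def by blast
  have eq: "(\<gamma>1 \<union> \<gamma>2) \<ominus> \<alpha> = (\<gamma>1 \<ominus> \<alpha>) \<union> \<gamma>2"
    by (simp add: ominus_union ominus_disj[OF assms(6) d])
  have aa: "Act ((\<gamma>1 \<union> \<gamma>2) \<ominus> \<alpha>) = Act (\<gamma>1 \<ominus> \<alpha>) \<union> Act \<gamma>2"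
    unfolding eq by (simp add: Act_def)
  have m: "\<forall>ai\<in>\<alpha>. \<forall>ak\<in>Act ((\<gamma>1 \<union> \<gamma>2) \<ominus> \<alpha>). h ai \<le> h ak"
    unfolding aa using assms(3,4) by blast
  have e: "E ((\<gamma>1 \<union> \<gamma>2) \<ominus> \<alpha>) h" unfolding eq by (rule assms(5))
  show ?thesis
    using E.E_step[of \<alpha> "\<gamma>1 \<union> \<gamma>2" h] assms(1,2) m e by blast
qed

lemma bwd: "\<forall>\<gamma>1 \<gamma>2. card (Act \<gamma>1 \<union> Act \<gamma>2) = n \<longrightarrow> finite (Act \<gamma>1 \<union> Act \<gamma>2)
   \<longrightarrow> (\<forall>\<beta>\<in>\<gamma>1\<union>\<gamma>2. \<beta>\<noteq>{}) \<longrightarrow> Act \<gamma>1 \<inter> Act \<gamma>2 = {} \<longrightarrow> E \<gamma>1 h \<longrightarrow> E \<gamma>2 h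
   \<longrightarrow> E (\<gamma>1\<union>\<gamma>2) h"
proof (induction n rule: less_induct)
  case (less n)
  show ?case
  proof (intro allI impI)
    fix \<gamma>1 \<gamma>2 :: "'a set set"
    assume c: "card (Act \<gamma>1 \<union> Act \<gamma>2) = n" and f: "finite (Act \<gamma>1 \<union> Act \<gamma>2)"
      and ne: "\<forall>\<beta>\<in>\<gamma>1\<union>\<gamma>2. \<beta>\<noteq>{}" and dj: "Act \<gamma>1 \<inter> Act \<gamma>2 = {}"
      and e1: "E \<gamma>1 h" and e2: "E \<gamma>2 h"
    show "E (\<gamma>1\<union>\<gamma>2) h"
    proof (cases "\<gamma>1 = {} \<or> \<gamma>2 = {}")
      case True then show ?thesis using e1 e2 by auto
    next
      case False
      have "\<exists>\<alpha>1. \<alpha>1 \<in> \<gamma>1 \<and> (\<forall>ai\<in>\<alpha>1. \<forall>aj\<in>\<alpha>1. h ai = h aj) \<and>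
        (\<forall>ai\<in>\<alpha>1. \<forall>ak\<in>Act (\<gamma>1 \<ominus> \<alpha>1). h ai \<le> h ak) \<and> E (\<gamma>1 \<ominus> \<alpha>1) h"
        using e1 False by (subst (asm) E.simps) blast
      then obtain \<alpha>1 where a1: "\<alpha>1 \<in> \<gamma>1" "\<forall>ai\<in>\<alpha>1. \<forall>aj\<in>\<alpha>1. h ai = h aj"
        "\<forall>ai\<in>\<alpha>1. \<forall>ak\<in>Act (\<gamma>1 \<ominus> \<alpha>1). h ai \<le> h ak" "E (\<gamma>1 \<ominus> \<alpha>1) h"
        by blast
      have "\<exists>\<alpha>2. \<alpha>2 \<in> \<gamma>2 \<and> (\<forall>ai\<in>\<alpha>2. \<forall>aj\<in>\<alpha>2. h ai = h aj) \<and>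
        (\<forall>ai\<in>\<alpha>2. \<forall>ak\<in>Act (\<gamma>2 \<ominus> \<alpha>2). h ai \<le> h ak) \<and> E (\<gamma>2 \<ominus> \<alpha>2) h"
        using e2 False by (subst (asm) E.simps) blast
      then obtain \<alpha>2 where a2: "\<alpha>2 \<in> \<gamma>2" "\<forall>ai\<in>\<alpha>2. \<forall>aj\<in>\<alpha>2. h ai = h aj"
        "\<forall>ai\<in>\<alpha>2. \<forall>ak\<in>Act (\<gamma>2 \<ominus> \<alpha>2). h ai \<le> h ak" "E (\<gamma>2 \<ominus> \<alpha>2) h"
        by blast
      obtain x1 where x1: "x1 \<in> \<alpha>1" using ne a1(1) by blast
      obtain x2 where x2: "x2 \<in> \<alpha>2" using ne a2(1) by blast
      have sub1: "\<alpha>1 \<subseteq> Act \<gamma>1" "\<alpha>2 \<subseteq> Act \<gamma>2" using a1(1) a2(1) unfolding Act_def by blast+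
      have ne1: "\<forall>\<beta>\<in>\<gamma>1. \<beta>\<noteq>{}" and ne2: "\<forall>\<beta>\<in>\<gamma>2. \<beta>\<noteq>{}" using ne by blast+
      show ?thesis
      proof (cases "h x1 \<le> h x2")
        case True
        have m: "\<forall>ai\<in>\<alpha>1. \<forall>ak\<in>Act \<gamma>2. h ai \<le> h ak"
        proof (intro ballI)
          fix ai ak assume "ai \<in> \<alpha>1" "ak \<in> Act \<gamma>2"
          have "h ai = h x1" using a1(2)[rule_format, OF \<open>ai \<in> \<alpha>1\<close> x1] .
          moreover have "h x2 \<le> h ak"
          proof (cases "ak \<in> \<alpha>2")
            case True then show ?thesis using a2(2)[rule_format, OF x2 True] by simp
          next
            case False
            then have "ak \<in> Act (\<gamma>2 \<ominus> \<alpha>2)" unfolding act_ominus using \<open>ak \<in> Act \<gamma>2\<close> by blast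
            then show ?thesis using a2(3)[rule_format, OF x2] by blast
          qed
          ultimately show "h ai \<le> h ak" using True by linarith
        qed
        have eqA: "Act (\<gamma>1 \<ominus> \<alpha>1) \<union> Act \<gamma>2 = (Act \<gamma>1 \<union> Act \<gamma>2) - \<alpha>1"
          unfolding act_ominus using sub1 dj by blast
        have ps: "(Act \<gamma>1 \<union> Act \<gamma>2) - \<alpha>1 \<subset> Act \<gamma>1 \<union> Act \<gamma>2" using x1 sub1 by blast
        have lt: "card (Act (\<gamma>1 \<ominus> \<alpha>1) \<union> Act \<gamma>2) < n"
          unfolding eqA c[symmetric] by (rule psubset_card_mono[OF f ps])
        have fin: "finite (Act (\<gamma>1 \<ominus> \<alpha>1) \<union> Act \<gamma>2)" unfolding eqA using f by simp
        have ne': "\<forall>\<beta>\<in>(\<gamma>1 \<ominus> \<alpha>1) \<union> \<gamma>2. \<beta>\<noteq>{}" using ominus_ne[of \<gamma>1 \<alpha>1] ne2 by blast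
        have dj': "Act (\<gamma>1 \<ominus> \<alpha>1) \<inter> Act \<gamma>2 = {}" unfolding act_ominus using dj by blast
        have "E ((\<gamma>1 \<ominus> \<alpha>1) \<union> \<gamma>2) h"
          using less.IH[OF lt] fin ne' dj' a1(4) e2 by blast
        then show ?thesis using bstep[OF a1(1-3) m _ ne2 dj] by blast
      next
        case False
        have m: "\<forall>ai\<in>\<alpha>2. \<forall>ak\<in>Act \<gamma>1. h ai \<le> h ak"
        proof (intro ballI)
          fix ai ak assume "ai \<in> \<alpha>2" "ak \<in> Act \<gamma>1"
          have "h ai = h x2" using a2(2)[rule_format, OF \<open>ai \<in> \<alpha>2\<close> x2] .
          moreover have "h x1 \<le> h ak"
          proof (cases "ak \<in> \<alpha>1")
            case True then show ?thesis using a1(2)[rule_format, OF x1 True] by simp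
          next
            case False
            then have "ak \<in> Act (\<gamma>1 \<ominus> \<alpha>1)" unfolding act_ominus using \<open>ak \<in> Act \<gamma>1\<close> by blast
            then show ?thesis using a1(3)[rule_format, OF x1] by blast
          qed
          ultimately show "h ai \<le> h ak" using False by linarith
        qed
        have eqA: "Act (\<gamma>2 \<ominus> \<alpha>2) \<union> Act \<gamma>1 = (Act \<gamma>1 \<union> Act \<gamma>2) - \<alpha>2"
          unfolding act_ominus using sub1 dj by blast
        have ps: "(Act \<gamma>1 \<union> Act \<gamma>2) - \<alpha>2 \<subset> Act \<gamma>1 \<union> Act \<gamma>2" using x2 sub1 by blast
        have lt: "card (Act (\<gamma>2 \<ominus> \<alpha>2) \<union> Act \<gamma>1) < n"
          unfolding eqA c[symmetric] by (rule psubset_card_mono[OF f ps])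
        have fin: "finite (Act (\<gamma>2 \<ominus> \<alpha>2) \<union> Act \<gamma>1)" unfolding eqA using f by simp
        have ne': "\<forall>\<beta>\<in>(\<gamma>2 \<ominus> \<alpha>2) \<union> \<gamma>1. \<beta>\<noteq>{}" using ominus_ne[of \<gamma>2 \<alpha>2] ne1 by blast
        have dj': "Act (\<gamma>2 \<ominus> \<alpha>2) \<inter> Act \<gamma>1 = {}" unfolding act_ominus using dj by blast
        have "E ((\<gamma>2 \<ominus> \<alpha>2) \<union> \<gamma>1) h"
          using less.IH[OF lt] fin ne' dj' a2(4) e1 by blast
        then have "E (\<gamma>2 \<union> \<gamma>1) h" using bstep[OF a2(1-3) m _ ne1] dj by blast
        then show ?thesis by (simp add: Un_commute)
      qed
    qed
  qed
qed

theorem proposition3: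
  fixes \<gamma>1 \<gamma>2 :: "'a set set"
  assumes "finite (\<gamma>1 \<union> \<gamma>2)"
    and "\<forall>\<alpha>\<in>\<gamma>1 \<union> \<gamma>2. interaction \<alpha>"
    and "Act \<gamma>1 \<inter> Act \<gamma>2 = {}"
  shows "\<forall>h :: 'a \<Rightarrow> real. E (\<gamma>1 \<union> \<gamma>2) h \<longleftrightarrow> E \<gamma>1 h \<and> E \<gamma>2 h"
proof
  fix h :: "'a \<Rightarrow> real"
  have ne: "\<forall>\<beta>\<in>\<gamma>1\<union>\<gamma>2. \<beta>\<noteq>{}" using assms(2) unfolding interaction_def by blast
  have f: "finite (Act \<gamma>1 \<union> Act \<gamma>2)"
    using assms(1,2) unfolding Act_def interaction_def by auto
  show "E (\<gamma>1 \<union> \<gamma>2) h \<longleftrightarrow> E \<gamma>1 h \<and> E \<gamma>2 h"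
  proof
    assume "E (\<gamma>1 \<union> \<gamma>2) h" then show "E \<gamma>1 h \<and> E \<gamma>2 h" using fwd[OF _ refl ne assms(3)] by blast
  next
    assume "E \<gamma>1 h \<and> E \<gamma>2 h" then show "E (\<gamma>1 \<union> \<gamma>2) h"
      using bwd[of "card (Act \<gamma>1 \<union> Act \<gamma>2)" h] f ne assms(3) by blast
  qed
qed

end
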